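(* Let $n\ge 1$ and let $\Pi_n=\{(u_1,\ldots,u_n)\in\mathbf{R}^n: u_i>0,\ u_i+u_{i+1}<\pi/2\ (1\le i\le n)\}$, with $u_{n+1}:=u_1$. The transformation $x_i=\frac{\sin u_i}{\cos u_{i+1}}$ ($1\le i\le n$, with $u_{n+1}:=u_1$) maps $\Pi_n$ bijectively onto the open unit cube $(0,1)^n$. *)

theory Defs
  imports "HOL-Analysis.Analysis"
begin

text \<open>Vectors in R^n are represented as functions nat => real, indexed by 0..n-1,
  and extensional: value 0 at indices >= n. Cyclic successor of index i is (i+1) mod n.\<close>

definition Pi_set :: "nat \<Rightarrow> (nat \<Rightarrow> real) set" where
  "Pi_set n = {u. (\<forall>i\<ge>n. u i = 0) \<and>
      (\<forall>i<n. u i > 0 \<and> u i + u ((i + 1) mod n) < pi / 2)}"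

definition open_cube :: "nat \<Rightarrow> (nat \<Rightarrow> real) set" where
  "open_cube n = {x. (\<forall>i\<ge>n. x i = 0) \<and> (\<forall>i<n. 0 < x i \<and> x i < 1)}"

definition sin_cos_map :: "nat \<Rightarrow> (nat \<Rightarrow> real) \<Rightarrow> (nat \<Rightarrow> real)" where
  "sin_cos_map n u = (\<lambda>i. if i < n then sin (u i) / cos (u ((i + 1) mod n)) else 0)"

end

theory Submission
  imports Defs
begin

function H :: "nat \<Rightarrow> (nat \<Rightarrow> real) \<Rightarrow> nat \<Rightarrow> real \<Rightarrow> real" where
  "H n x k t = (if n \<le> k then t else (x k)^2 * (1 - H n x (Suc k) t))"
  by auto
termination by (relation "Wellfounded.measure (\<lambda>(n,x,k,t). n - k)") auto

declare H.simps[simp del]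

lemma H_ge: "n \<le> k \<Longrightarrow> H n x k t = t"
  by (simp add: H.simps)

lemma H_lt: "k < n \<Longrightarrow> H n x k t = (x k)^2 * (1 - H n x (Suc k) t)"
  by (simp add: H.simps)

lemma H_cont: "continuous_on S (H n x k)"
proof (induction "n - k" arbitrary: k)
  case 0
  then have "H n x k = (\<lambda>t. t)" by (simp add: H_ge fun_eq_iff)
  then show ?case by (simp add: continuous_on_id)
next
  case (Suc m)
  then have "H n x k = (\<lambda>t. (x k)^2 * (1 - H n x (Suc k) t))"
    by (simp add: H_lt fun_eq_iff)
  moreover have "continuous_on S (H n x (Suc k))" using Suc by simp
  ultimately show ?case
    by (auto intro!: continuous_intros)
qed

lemma H_range:
  "(\<forall>i<n. 0 < x i \<and> x i < 1) \<Longrightarrow> 0 \<le> t \<Longrightarrow> t \<le> 1 \<Longrightarrow> 0 \<le> H n x k t \<and> H n x k t \<le> 1"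
proof (induction n x k t rule: H.induct)
  case (1 n x k t)
  show ?case
  proof (cases "n \<le> k")
    case True
    then show ?thesis using 1 by (simp add: H_ge)
  next
    case False
    then have e: "H n x k t = (x k)^2 * (1 - H n x (Suc k) t)" by (simp add: H_lt)
    have ih: "0 \<le> H n x (Suc k) t \<and> H n x (Suc k) t \<le> 1" using 1 False by auto
    have xk: "0 < x k" "x k < 1" using 1(2) False by auto
    have "(x k)^2 \<le> 1" using xk by (simp add: abs_square_le_1)
    then show ?thesis unfolding e using ih
      by (simp add: mult_le_one)
  qed
qed

lemma Pi_props:
  assumes "n \<ge> 1" "u \<in> Pi_set n" "i < n"
  shows "0 < u i" "u i < pi/2" "u i + u ((i+1) mod n) < pi/2" "0 < u ((i+1) mod n)"
    "(i+1) mod n < n"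
proof -
  show jn: "(i+1) mod n < n" using assms by simp
  show "0 < u i" "u i + u ((i+1) mod n) < pi/2" "0 < u ((i+1) mod n)"
    using assms jn unfolding Pi_set_def by auto
  then show "u i < pi/2" by linarith
qed

lemma map_in_cube:
  assumes "n \<ge> 1" "u \<in> Pi_set n" "i < n"
  shows "0 < sin_cos_map n u i" "sin_cos_map n u i < 1"
proof -
  let ?j = "(i+1) mod n"
  note p = Pi_props[OF assms]
  have uj: "u ?j < pi/2" using Pi_props[OF assms(1,2) p(5)] by simp
  have si: "0 < sin (u i)" using p by (intro sin_gt_zero) (auto simp: pi_gt_zero)
  have cj: "0 < cos (u ?j)" using p uj by (intro cos_gt_zero) auto
  have "sin (u i) < sin (pi/2 - u ?j)"
    using p uj by (subst sin_mono_less_eq) auto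
  then have lt: "sin (u i) < cos (u ?j)" by (simp add: sin_cos_eq)
  show "0 < sin_cos_map n u i" using si cj assms(3) by (simp add: sin_cos_map_def)
  show "sin_cos_map n u i < 1" using lt cj assms(3) by (simp add: sin_cos_map_def)
qed

theorem lemma2:
  fixes n :: nat
  assumes "n \<ge> 1"
  shows "bij_betw (sin_cos_map n) (Pi_set n) (open_cube n)"
proof (rule bij_betw_imageI)
  show "inj_on (sin_cos_map n) (Pi_set n)"
  proof (rule inj_onI)
    fix u v assume u: "u \<in> Pi_set n" and v: "v \<in> Pi_set n"
      and eq: "sin_cos_map n u = sin_cos_map n v"
    define x where "x = sin_cos_map n u"
    define d where "d = (\<lambda>i. (sin (u i))^2 - (sin (v i))^2)"
    have rel: "(sin (w i))^2 = (x i)^2 * (1 - (sin (w ((i+1) mod n)))^2)"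
      if w: "w \<in> Pi_set n" "sin_cos_map n w = x" and i: "i < n" for w i
    proof -
      let ?j = "(i+1) mod n"
      note p = Pi_props[OF assms w(1) i]
      have uj: "w ?j < pi/2" using Pi_props[OF assms w(1) p(5)] by simp
      have cj: "0 < cos (w ?j)" using p uj by (intro cos_gt_zero) auto
      have "x i = sin (w i) / cos (w ?j)" using w(2) i by (auto simp: sin_cos_map_def)
      then have "sin (w i) = x i * cos (w ?j)" using cj by (simp add: field_simps)
      then have "(sin (w i))^2 = (x i)^2 * (cos (w ?j))^2" by (simp add: power_mult_distrib)
      then show ?thesis by (simp add: cos_squared_eq)
    qed
    have drel: "d i = -((x i)^2 * d ((i+1) mod n))" if i: "i < n" for i
      using rel[OF u x_def[symmetric] i] rel[OF v eq[symmetric, folded x_def] i]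
      unfolding d_def by (simp add: algebra_simps)
    define M where "M = Max ((\<lambda>i. \<bar>d i\<bar>) ` {..<n})"
    have "0 \<in> {..<n}" using assms by simp
    then have ne: "{..<n} \<noteq> {}" by blast
    have "M \<in> (\<lambda>i. \<bar>d i\<bar>) ` {..<n}" unfolding M_def using ne by (intro Max_in) auto
    then obtain k where k: "k < n" "\<bar>d k\<bar> = M" by auto
    have Mge: "\<bar>d i\<bar> \<le> M" if "i < n" for i
      unfolding M_def using that by (intro Max_ge) auto
    have M0: "M = 0"
    proof (rule ccontr)
      assume "M \<noteq> 0"
      then have Mp: "M > 0" using k by auto
      have xk: "0 < x k" "x k < 1" using map_in_cube[OF assms u k(1)] x_def by auto
      have x2: "(x k)^2 < 1" using xk by (simp add: power_less_one_iff abs_less_iff)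
      have jn: "(k+1) mod n < n" using assms by simp
      have "M = (x k)^2 * \<bar>d ((k+1) mod n)\<bar>" using drel[OF k(1)] k(2)
        by (simp add: abs_mult)
      also have "\<dots> \<le> (x k)^2 * M" using Mge[OF jn] by (simp add: mult_left_mono)
      also have "\<dots> < M" using x2 Mp by simp
      finally show False by simp
    qed
    show "u = v"
    proof
      fix i
      show "u i = v i"
      proof (cases "i < n")
        case False
        then show ?thesis using u v unfolding Pi_set_def by auto
      next
        case True
        have "d i = 0" using Mge[OF True] M0 by simp
        then have sq: "(sin (u i))^2 = (sin (v i))^2" unfolding d_def by simp
        note pu = Pi_props[OF assms u True] and pv = Pi_props[OF assms v True]
        have "0 < sin (u i)" using pu by (intro sin_gt_zero) (auto simp: pi_gt_zero)
        moreover have "0 < sin (v i)" using pv by (intro sin_gt_zero) (auto simp: pi_gt_zero)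
        ultimately have "sin (u i) = sin (v i)" by (intro power2_eq_imp_eq[OF sq]) auto
        then have "arcsin (sin (u i)) = arcsin (sin (v i))" by simp
        then show ?thesis using pu pv by (simp add: arcsin_sin)
      qed
    qed
  qed
next
  show "sin_cos_map n ` Pi_set n = open_cube n"
  proof
    show "sin_cos_map n ` Pi_set n \<subseteq> open_cube n"
    proof (rule image_subsetI)
      fix u assume u: "u \<in> Pi_set n"
      have "\<forall>i\<ge>n. sin_cos_map n u i = 0" by (simp add: sin_cos_map_def)
      moreover have "\<forall>i<n. 0 < sin_cos_map n u i \<and> sin_cos_map n u i < 1"
        using map_in_cube[OF assms u] by blast
      ultimately show "sin_cos_map n u \<in> open_cube n" unfolding open_cube_def by blast
    qed
  next
    show "open_cube n \<subseteq> sin_cos_map n ` Pi_set n"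
    proof
      fix x assume x: "x \<in> open_cube n"
      have xb: "\<forall>i<n. 0 < x i \<and> x i < 1" using x unfolding open_cube_def by auto
      have h1: "H n x 0 1 - 1 \<le> 0" using H_range[OF xb, of 1 0] by simp
      have h0: "0 \<le> H n x 0 0 - 0" using H_range[OF xb, of 0 0] by simp
      have hc: "continuous_on {0..1} (\<lambda>t. H n x 0 t - t)"
        by (intro continuous_on_diff H_cont continuous_on_id)
      have "\<exists>t\<ge>0. t \<le> 1 \<and> H n x 0 t - t = 0"
        using IVT2'[of "\<lambda>t. H n x 0 t - t" 1 0 0] h1 h0 hc by simp
      then obtain t where t: "0 \<le> t" "t \<le> 1" "H n x 0 t = t" by auto
      define s where "s = (\<lambda>i. H n x i t)"
      have s01: "0 \<le> s i \<and> s i \<le> 1" for i using H_range[OF xb t(1,2)] s_def by simp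
      have srel: "s i = (x i)^2 * (1 - s ((i+1) mod n))" if i: "i < n" for i
      proof (cases "Suc i < n")
        case True
        then show ?thesis using i by (simp add: s_def H_lt)
      next
        case False
        then have "Suc i = n" using i by simp
        then show ?thesis using i t(3) by (simp add: s_def H_lt H_ge)
      qed
      have sx: "s i < 1 - s ((i+1) mod n)" "0 < s i" "s i < 1" if i: "i < n" for i
      proof -
        have jn: "(i+1) mod n < n" using assms by simp
        have x2: "(x i)^2 < 1" "0 < (x i)^2" using xb i by (auto simp: power_less_one_iff abs_less_iff)
        have x2j: "(x ((i+1) mod n))^2 < 1" using xb jn by (auto simp: power_less_one_iff abs_less_iff)
        let ?j = "(i+1) mod n" and ?k = "((i+1) mod n + 1) mod n"
        have "s ?j = (x ?j)^2 * (1 - s ?k)" using srel[OF jn] .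
        also have "\<dots> \<le> (x ?j)^2" using s01[of ?k] by (intro mult_left_le) auto
        finally have sj: "s ?j < 1" using x2j by linarith
        have pos: "0 < 1 - s ?j" using sj by simp
        have "s i = (x i)^2 * (1 - s ?j)" using srel[OF i] .
        also have "\<dots> < 1 * (1 - s ?j)" using x2(1) pos by (intro mult_strict_right_mono)
        finally show lt: "s i < 1 - s ?j" by simp
        have "0 < (x i)^2 * (1 - s ?j)" using x2(2) pos by simp
        then show "0 < s i" using srel[OF i] by simp
        show "s i < 1" using lt s01[of ?j] by linarith
      qed
      define u where "u = (\<lambda>i. if i < n then arcsin (sqrt (s i)) else 0)"
      have sq1: "-1 \<le> sqrt (s i)" "sqrt (s i) \<le> 1" for i
      proof -
        have "0 \<le> sqrt (s i)" using s01[of i] by simp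
        then show "-1 \<le> sqrt (s i)" by linarith
        show "sqrt (s i) \<le> 1" using s01[of i] by simp
      qed
      have sinu: "sin (u i) = sqrt (s i)" if "i < n" for i
        using that sin_arcsin[OF sq1] by (simp add: u_def)
      have cosu: "cos (u i) = sqrt (1 - s i)" if "i < n" for i
        using that cos_arcsin[OF sq1] s01[of i] by (simp add: u_def)
      have ub: "0 < u i" "u i < pi/2" if i: "i < n" for i
      proof -
        have "arcsin 0 < arcsin (sqrt (s i))" using sx[OF i] s01[of i]
          by (intro arcsin_less_arcsin) auto
        then show "0 < u i" using i by (simp add: u_def)
        have "sqrt (s i) < 1" using sx[OF i] by simp
        moreover have "-1 < sqrt (s i)" using s01[of i] by (smt (verit) real_sqrt_ge_zero)
        ultimately have "arcsin (sqrt (s i)) < pi/2" using arcsin_lt_bounded by blast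
        then show "u i < pi/2" using i by (simp add: u_def)
      qed
      have "u \<in> Pi_set n"
        unfolding Pi_set_def
      proof (intro CollectI conjI allI impI)
        fix i assume i: "i < n"
        have jn: "(i+1) mod n < n" using assms by simp
        show "0 < u i" using ub[OF i] by simp
        have "sqrt (s i) < sqrt (1 - s ((i+1) mod n))" using sx[OF i] by simp
        then have "sin (u i) < sin (pi/2 - u ((i+1) mod n))"
          using sinu[OF i] cosu[OF jn] by (simp add: sin_diff)
        then have "u i < pi/2 - u ((i+1) mod n)"
          using ub[OF i] ub[OF jn] by (subst (asm) sin_mono_less_eq) auto
        then show "u i + u ((i+1) mod n) < pi/2" by simp
      qed (simp add: u_def)
      moreover have "sin_cos_map n u = x"
      proof
        fix i
        show "sin_cos_map n u i = x i"
        proof (cases "i < n")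
          case False
          then show ?thesis using x by (simp add: sin_cos_map_def open_cube_def)
        next
          case True
          have jn: "(i+1) mod n < n" using assms by simp
          have pos: "0 < 1 - s ((i+1) mod n)" using sx[OF jn] by simp
          have "sin_cos_map n u i = sqrt (s i) / sqrt (1 - s ((i+1) mod n))"
            using True sinu[OF True] cosu[OF jn] by (simp add: sin_cos_map_def)
          also have "\<dots> = sqrt (s i / (1 - s ((i+1) mod n)))" by (simp add: real_sqrt_divide)
          also have "s i / (1 - s ((i+1) mod n)) = (x i)^2" using srel[OF True] pos by simp
          also have "sqrt ((x i)^2) = x i" using xb True by (simp add: abs_of_pos)
          finally show ?thesis .
        qed
      qed
      ultimately show "x \<in> sin_cos_map n ` Pi_set n" by blast
    qed
  qed
qed

end
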